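(* Let $\hat{A}\in\{0,1\}^{n\times n}$ be symmetric with exactly $m$ non-zero entries and no zero row, and let $d_i=\sum_j\hat{A}_{ij}$. Let $V=\{1,\dots,n\}$ be partitioned into $k$ disjoint groups $B_1,\dots,B_k$, and let $\overline{F}\in\mathbb{R}^{n\times n}$ be a $k\times k$ block matrix with respect to this partition: there is a symmetric $C\in\mathbb{R}^{k\times k}$ with $\overline{F}_{ab}=C_{pq}$ whenever $a\in B_p$, $b\in B_q$. Set $c=\sum_{a,b}\overline{F}_{ab}\hat{A}_{ab}$. Consider the Lagrange dual function of the maximum entropy model with one constraint on each node degree and one constraint given by $\overline{F}$: $$L(\lambda_1,\dots,\lambda_n,\mu)=\sum_{a=1}^n\sum_{b=1}^n\log\bigl(1+\exp(\lambda_a+\mu\overline{F}_{ab})\bigr)-\sum_{a=1}^n d_a\lambda_a-c\,\mu ,$$ a convex function on $\mathbb{R}^{n+1}$. Let $W\subseteq\mathbb{R}^{n+1}$ be the linear subspace of vectors $(\lambda,\mu)$ with $\lambda_a=\lambda_b$ whenever $a,b$ lie in the same group $B_p$ and $d_a=d_b$. Then $W$ has dimension at most $\sqrt{2km}+1$, the restriction of $L$ to $W$ is an unconstrained convex function of at most $\sqrt{2km}+1$ free variables, $\inf_{W}L=\inf_{\mathbb{R}^{n+1}}L$, and every minimizer of $L$ on $W$ is a global minimizer of $L$. In particular, the maximum entropy model can be solved by optimizing an unconstrained convex problem with at most $\sqrt{2km}+1$ variables.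
   Context: Maximum entropy (MaxEnt) model: given feature matrices $F_l=[f^l_{ij}]\in\mathbb{R}^{n\times n}$, $l=1,\dots,M$, and an observed adjacency matrix $\hat{A}$, one seeks the distribution $P$ over $\{0,1\}^{n\times n}$ maximizing the entropy $-\mathbb{E}_P[\log P(A)]$ subject to $\mathbb{E}_P[\sum_{i,j}f^l_{ij}A_{ij}]=c_l:=\sum_{i,j}f^l_{ij}\hat{A}_{ij}$ for all $l$. Its solution is obtained from minimizers $(\lambda_l)$ of the Lagrange dual $\sum_{i,j}\log(1+\exp(\sum_l f^l_{ij}\lambda_l))-\sum_l c_l\lambda_l$. A degree constraint for node $a$ corresponds to the feature matrix with ones in row $a$ and zeros elsewhere (multiplier $\lambda_a$), and the global constraint corresponds to $\overline{F}$ (multiplier $\mu$), which yields the function $L$ above. *)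

theory Defs
  imports "HOL-Analysis.Analysis"
begin

text \<open>Nodes are the elements of a finite type 'n (so n = CARD('n)); the space R^(n+1)
  of dual variables (lambda_1..lambda_n, mu) is rendered as (real^'n) \<times> real.\<close>

definition deg :: "('n::finite \<Rightarrow> 'n \<Rightarrow> real) \<Rightarrow> 'n \<Rightarrow> real" where
  "deg A i = (\<Sum>j\<in>UNIV. A i j)"

definition num_edges :: "('n::finite \<Rightarrow> 'n \<Rightarrow> real) \<Rightarrow> nat" where
  "num_edges A = card {(i, j). A i j \<noteq> 0}"

definition glob_c :: "('n::finite \<Rightarrow> 'n \<Rightarrow> real) \<Rightarrow> ('n \<Rightarrow> 'n \<Rightarrow> real) \<Rightarrow> real" where
  "glob_c F A = (\<Sum>a\<in>UNIV. \<Sum>b\<in>UNIV. F a b * A a b)"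

definition maxent_L ::
  "('n::finite \<Rightarrow> 'n \<Rightarrow> real) \<Rightarrow> ('n \<Rightarrow> 'n \<Rightarrow> real) \<Rightarrow> (real^'n) \<times> real \<Rightarrow> real" where
  "maxent_L A F x =
     (\<Sum>a\<in>UNIV. \<Sum>b\<in>UNIV. ln (1 + exp (fst x $ a + snd x * F a b)))
     - (\<Sum>a\<in>UNIV. deg A a * fst x $ a) - glob_c F A * snd x"

definition reduced_space ::
  "('n::finite \<Rightarrow> 'n \<Rightarrow> real) \<Rightarrow> ('n \<Rightarrow> nat) \<Rightarrow> ((real^'n) \<times> real) set" where
  "reduced_space A g = {x. \<forall>a b. g a = g b \<and> deg A a = deg A b \<longrightarrow> fst x $ a = fst x $ b}"

end

theory Submission
  imports Defs
begin

definition sp :: "real \<Rightarrow> real" where "sp t = ln (1 + exp t)"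

lemma sp_convex: "convex_on UNIV sp"
proof (rule convex_on_realI[where f' = "\<lambda>t. exp t / (1 + exp t)"])
  show "connected (UNIV::real set)" by simp
  fix x :: real
  show "(sp has_real_derivative exp x / (1 + exp x)) (at x)"
    unfolding sp_def
    by (rule derivative_eq_intros refl | simp add: add_pos_pos)+
next
  fix x y :: real assume "x \<le> y"
  then have "exp x \<le> exp y" by simp
  then show "exp x / (1 + exp x) \<le> exp y / (1 + exp y)"
    by (simp add: divide_simps add_pos_pos algebra_simps)
qed

lemma sp_ineq: "sp (u * x + v * y) \<le> u * sp x + v * sp y" if "u \<ge> 0" "v \<ge> 0" "u + v = 1"
  using sp_convex that unfolding convex_on_def by auto

lemma sp_ge: "sp s \<ge> s" "sp s \<ge> 0"
proof -
  have "ln (exp s) \<le> ln (1 + exp s)" by (subst ln_le_cancel_iff) (auto intro: add_pos_pos)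
  then show "sp s \<ge> s" by (simp add: sp_def)
  show "sp s \<ge> 0" unfolding sp_def by simp
qed

lemma L_eq: "maxent_L A F x =
  (\<Sum>a\<in>UNIV. \<Sum>b\<in>UNIV. sp (fst x $ a + snd x * F a b)) - (\<Sum>a\<in>UNIV. deg A a * fst x $ a) - glob_c F A * snd x"
  by (simp add: maxent_L_def sp_def)

lemma L_convex: "convex_on UNIV (maxent_L A F)"
proof -
  { fix x y :: "(real^'a) \<times> real" and u v :: real
    assume uv: "u \<ge> 0" "v \<ge> 0" "u + v = 1"
    have 1: "(\<Sum>a\<in>UNIV. \<Sum>b\<in>UNIV. sp (fst (u *\<^sub>R x + v *\<^sub>R y) $ a + snd (u *\<^sub>R x + v *\<^sub>R y) * F a b))
      \<le> (\<Sum>a\<in>UNIV. \<Sum>b\<in>UNIV. u * sp (fst x $ a + snd x * F a b) + v * sp (fst y $ a + snd y * F a b))"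
    proof (intro sum_mono)
      fix a b
      have "fst (u *\<^sub>R x + v *\<^sub>R y) $ a + snd (u *\<^sub>R x + v *\<^sub>R y) * F a b
         = u * (fst x $ a + snd x * F a b) + v * (fst y $ a + snd y * F a b)"
        by (simp add: algebra_simps)
      then show "sp (fst (u *\<^sub>R x + v *\<^sub>R y) $ a + snd (u *\<^sub>R x + v *\<^sub>R y) * F a b)
        \<le> u * sp (fst x $ a + snd x * F a b) + v * sp (fst y $ a + snd y * F a b)"
        using sp_ineq[OF uv] by simp
    qed
    have 2: "(\<Sum>a\<in>UNIV. deg A a * fst (u *\<^sub>R x + v *\<^sub>R y) $ a) =
       u * (\<Sum>a\<in>UNIV. deg A a * fst x $ a) + v * (\<Sum>a\<in>UNIV. deg A a * fst y $ a)"
      by (simp add: algebra_simps sum.distrib sum_distrib_left)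
    have 3: "(\<Sum>a\<in>UNIV. \<Sum>b\<in>UNIV. u * sp (fst x $ a + snd x * F a b) + v * sp (fst y $ a + snd y * F a b))
      = u * (\<Sum>a\<in>UNIV. \<Sum>b\<in>UNIV. sp (fst x $ a + snd x * F a b)) + v * (\<Sum>a\<in>UNIV. \<Sum>b\<in>UNIV. sp (fst y $ a + snd y * F a b))"
      by (simp add: sum.distrib sum_distrib_left)
    have "maxent_L A F (u *\<^sub>R x + v *\<^sub>R y) \<le> u * maxent_L A F x + v * maxent_L A F y"
      unfolding L_eq using 1 2 3 uv by (simp add: algebra_simps)
  }
  then show ?thesis unfolding convex_on_def by auto
qed

lemma H_convex: "convex_on UNIV (\<lambda>t. (\<Sum>b\<in>UNIV. sp (t + c b)) - d * t)"
proof -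
  { fix x y u v :: real
    assume uv: "u \<ge> 0" "v \<ge> 0" "u + v = 1"
    have "(\<Sum>b\<in>UNIV. sp ((u * x + v * y) + c b)) \<le> (\<Sum>b\<in>(UNIV::'a set). u * sp (x + c b) + v * sp (y + c b))"
    proof (intro sum_mono)
      fix b
      have "u * (x + c b) + v * (y + c b) = u * x + v * y + (u + v) * c b" by (simp add: algebra_simps)
      then have "(u * x + v * y) + c b = u * (x + c b) + v * (y + c b)" using uv by simp
      then show "sp ((u * x + v * y) + c b) \<le> u * sp (x + c b) + v * sp (y + c b)"
        using sp_ineq[OF uv] by simp
    qed
    then have "(\<Sum>b\<in>UNIV. sp ((u * x + v * y) + c b)) - d * (u * x + v * y)
      \<le> u * ((\<Sum>b\<in>(UNIV::'a set). sp (x + c b)) - d * x) + v * ((\<Sum>b\<in>(UNIV::'a set). sp (y + c b)) - d * y)"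
      by (simp add: sum.distrib sum_distrib_left algebra_simps)
  }
  then show ?thesis unfolding convex_on_def by auto
qed

lemma avg_exists:
  fixes A F :: "'n::finite \<Rightarrow> 'n \<Rightarrow> real" and g :: "'n \<Rightarrow> nat"
  assumes Fg: "\<forall>a b. F a b = C (g a) (g b)"
  shows "\<exists>y'\<in>reduced_space A g. maxent_L A F y' \<le> maxent_L A F y"
proof -
  obtain l \<mu> where y: "y = (l, \<mu>)" by (cases y)
  define E where "E a = {b. g a = g b \<and> deg A a = deg A b}" for a
  define H where "H a t = (\<Sum>b\<in>UNIV. sp (t + \<mu> * F a b)) - deg A a * t" for a t
  have Hconv: "convex_on UNIV (H a)" for a
    unfolding H_def using H_convex[of "\<lambda>b. \<mu> * F a b" "deg A a"] by simp
  have Heq: "H b = H a" if "b \<in> E a" for a b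
    using that Fg unfolding H_def E_def by (auto intro!: ext)
  have EE: "E b = E a" if "b \<in> E a" for a b
    using that unfolding E_def by auto
  have inE: "b \<in> E a \<longleftrightarrow> a \<in> E b" for a b unfolding E_def by auto
  have selfE: "a \<in> E a" for a unfolding E_def by auto
  have cardpos: "card (E a) > 0" for a using selfE[of a] by (auto simp: card_gt_0_iff)
  define l' where "l' = (\<chi> a. (\<Sum>b\<in>E a. l $ b) / card (E a))"
  have W: "(l', \<mu>) \<in> reduced_space A g"
    unfolding reduced_space_def l'_def using EE unfolding E_def by auto
  have Lsplit: "maxent_L A F (z, \<mu>) = (\<Sum>a\<in>UNIV. H a (z $ a)) - glob_c F A * \<mu>" for z
    unfolding L_eq H_def by (simp add: sum_subtractf)
  have Ej: "H a (l' $ a) \<le> (\<Sum>b\<in>E a. H b (l $ b) / card (E a))" for a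
  proof -
    have "H a (\<Sum>b\<in>E a. (1 / card (E a)) *\<^sub>R (l $ b)) \<le> (\<Sum>b\<in>E a. (1 / card (E a)) * H a (l $ b))"
      by (rule convex_on_sum[OF _ _ Hconv]) (use selfE cardpos in auto)
    moreover have "(\<Sum>b\<in>E a. (1 / card (E a)) *\<^sub>R (l $ b)) = l' $ a"
      unfolding l'_def by (simp add: sum_divide_distrib)
    moreover have "(\<Sum>b\<in>E a. (1 / card (E a)) * H a (l $ b)) = (\<Sum>b\<in>E a. H b (l $ b) / card (E a))"
      by (rule sum.cong) (auto simp: Heq)
    ultimately show ?thesis by simp
  qed
  define f where "f b = H b (l $ b)" for b
  have sw: "(\<Sum>a\<in>UNIV. \<Sum>b\<in>E a. f b / card (E a)) = (\<Sum>b\<in>UNIV. f b)"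
  proof -
    have "(\<Sum>a\<in>UNIV. \<Sum>b\<in>E a. f b / card (E a)) = (\<Sum>a\<in>UNIV. \<Sum>b\<in>UNIV. if b \<in> E a then f b / card (E b) else 0)"
    proof (rule sum.cong[OF refl])
      fix a
      have "(\<Sum>b\<in>E a. f b / card (E a)) = (\<Sum>b\<in>E a. f b / card (E b))"
        by (rule sum.cong) (auto simp: EE)
      also have "\<dots> = (\<Sum>b\<in>UNIV. if b \<in> E a then f b / card (E b) else 0)"
        by (simp add: sum.If_cases)
      finally show "(\<Sum>b\<in>E a. f b / card (E a)) = (\<Sum>b\<in>UNIV. if b \<in> E a then f b / card (E b) else 0)" .
    qed
    also have "\<dots> = (\<Sum>b\<in>UNIV. \<Sum>a\<in>UNIV. if b \<in> E a then f b / card (E b) else 0)"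
      by (rule sum.swap)
    also have "\<dots> = (\<Sum>b\<in>UNIV. f b)"
    proof (rule sum.cong[OF refl])
      fix b
      have "(\<Sum>a\<in>UNIV. if b \<in> E a then f b / card (E b) else 0) = (\<Sum>a\<in>E b. f b / card (E b))"
        by (simp add: sum.If_cases inE)
      also have "\<dots> = f b" using cardpos[of b] selfE[of b] by auto
      finally show "(\<Sum>a\<in>UNIV. if b \<in> E a then f b / card (E b) else 0) = f b" .
    qed
    finally show ?thesis .
  qed
  have "(\<Sum>a\<in>UNIV. H a (l' $ a)) \<le> (\<Sum>a\<in>UNIV. \<Sum>b\<in>E a. f b / card (E a))"
    by (rule sum_mono) (use Ej in \<open>simp add: f_def\<close>)
  then have "maxent_L A F (l', \<mu>) \<le> maxent_L A F y"
    unfolding y Lsplit sw by (simp add: f_def)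
  with W show ?thesis by blast
qed


lemma sum_distinct_ge:
  "finite S \<Longrightarrow> \<forall>d\<in>S. (d::nat) \<ge> 1 \<Longrightarrow> card S * (card S + 1) \<le> 2 * \<Sum> S"
proof (induct "card S" arbitrary: S)
  case 0 then show ?case by simp
next
  case (Suc n)
  then have ne: "S \<noteq> {}" by auto
  define M where "M = Max S"
  have MS: "M \<in> S" using ne Suc.prems M_def by simp
  have "S \<subseteq> {1..M}" using Suc.prems M_def by auto
  then have cM: "card S \<le> M" using card_mono[of "{1..M}" S] by simp
  have c': "card (S - {M}) = n" using Suc.hyps(2) MS Suc.prems by simp
  have IH: "n * (n + 1) \<le> 2 * \<Sum> (S - {M})"
    using Suc.hyps(1)[of "S - {M}"] c' Suc.prems by auto
  have "\<Sum> S = M + \<Sum> (S - {M})" using sum.remove[OF Suc.prems(1) MS, of "\<lambda>x. x"] by simp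
  then show ?case using IH cM Suc.hyps(2)[symmetric] by (simp add: algebra_simps)
qed

lemma count_bound:
  fixes A :: "'n::finite \<Rightarrow> 'n \<Rightarrow> real" and g :: "'n \<Rightarrow> nat"
  assumes A01: "\<forall>i j. A i j \<in> {0, 1}"
    and Arow: "\<forall>i. \<exists>j. A i j \<noteq> 0"
    and g_range: "\<forall>a. g a < k"
  shows "real (card (range (\<lambda>a. (g a, deg A a)))) \<le> sqrt (2 * real k * real (num_edges A))"
proof -
  define dn where "dn a = card {j. A a j \<noteq> 0}" for a
  have degn: "deg A a = real (dn a)" for a
  proof -
    have "deg A a = (\<Sum>j\<in>UNIV. if A a j \<noteq> 0 then 1 else 0)"
      unfolding deg_def by (rule sum.cong) (use A01 in auto)
    also have "\<dots> = real (dn a)" by (simp add: sum.If_cases dn_def)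
    finally show ?thesis .
  qed
  have dn_pos: "dn a \<ge> 1" for a
    using Arow[rule_format, of a] unfolding dn_def
    by (metis (mono_tags, lifting) One_nat_def Suc_leI card_gt_0_iff empty_Collect_eq finite)
  have m: "num_edges A = (\<Sum>a\<in>UNIV. dn a)"
  proof -
    have "{(i, j). A i j \<noteq> 0} = Sigma UNIV (\<lambda>i. {j. A i j \<noteq> 0})" by auto
    then show ?thesis unfolding num_edges_def dn_def by (simp add: card_SigmaI)
  qed
  define cl where "cl a = (g a, dn a)" for a
  define Cl where "Cl = range cl"
  have "range (\<lambda>a. (g a, deg A a)) = (\<lambda>(p, d). (p, real d)) ` Cl"
    unfolding Cl_def cl_def degn by auto
  moreover have "inj_on (\<lambda>(p, d). (p, real d)) Cl" by (auto simp: inj_on_def)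
  ultimately have card_eq: "card (range (\<lambda>a. (g a, deg A a))) = card Cl"
    by (simp add: card_image)
  define S where "S p = {d. (p, d) \<in> Cl}" for p
  have ClS: "Cl = Sigma {..<k} S"
    unfolding S_def Cl_def cl_def using g_range by auto
  have finCl: "finite Cl" unfolding Cl_def by simp
  have finS: "finite (S p)" for p
  proof -
    have "S p \<subseteq> snd ` Cl" unfolding S_def by force
    then show ?thesis using finCl finite_subset by blast
  qed
  have cardCl: "card Cl = (\<Sum>p<k. card (S p))"
    unfolding ClS using finS by (simp add: card_SigmaI)
  have sumCl: "(\<Sum>c\<in>Cl. snd c) = (\<Sum>p<k. \<Sum> (S p))"
    unfolding ClS using finS by (simp add: sum.Sigma split_def)
  have m_ge: "(\<Sum>c\<in>Cl. snd c) \<le> (\<Sum>a\<in>UNIV. dn a)"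
  proof -
    have "(\<Sum>a\<in>UNIV. dn a) = (\<Sum>c\<in>Cl. \<Sum>a\<in>{x. x \<in> UNIV \<and> cl x = c}. dn a)"
      unfolding Cl_def by (rule sum.image_gen) simp
    moreover have "snd c \<le> (\<Sum>a\<in>{x. x \<in> UNIV \<and> cl x = c}. dn a)" if cCl: "c \<in> Cl" for c
    proof -
      obtain a where a: "cl a = c" using cCl unfolding Cl_def by auto
      then have "snd c = dn a" by (auto simp: cl_def)
      also have "\<dots> \<le> (\<Sum>a\<in>{x. x \<in> UNIV \<and> cl x = c}. dn a)"
        by (rule member_le_sum) (use a in auto)
      finally show ?thesis .
    qed
    ultimately show ?thesis by (simp add: sum_mono)
  qed
  have Sge: "\<forall>d\<in>S p. d \<ge> 1" for p unfolding S_def Cl_def cl_def using dn_pos by auto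
  have "(\<Sum>p<k. card (S p) ^ 2) \<le> (\<Sum>p<k. card (S p) * (card (S p) + 1))"
    by (rule sum_mono) (simp add: power2_eq_square)
  also have "\<dots> \<le> (\<Sum>p<k. 2 * \<Sum> (S p))"
    by (rule sum_mono) (use sum_distinct_ge finS Sge in auto)
  also have "\<dots> = 2 * (\<Sum>p<k. \<Sum> (S p))"
    by (simp add: sum_distrib_left)
  also have "\<dots> = 2 * (\<Sum>c\<in>Cl. snd c)" by (simp only: sumCl)
  also have "\<dots> \<le> 2 * num_edges A"
    using m_ge unfolding m by linarith
  finally have N: "(\<Sum>p<k. card (S p) ^ 2) \<le> 2 * num_edges A" .
  then have "real (\<Sum>p<k. card (S p) ^ 2) \<le> real (2 * num_edges A)"
    by (simp only: of_nat_le_iff)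
  then have sq: "(\<Sum>p<k. real (card (S p)) ^ 2) \<le> 2 * real (num_edges A)"
    by simp
  have cs: "(\<Sum>p<k. real (card (S p)) * 1)\<^sup>2 \<le> (\<Sum>p<k. (real (card (S p)))\<^sup>2) * (\<Sum>p<k. (1::real)\<^sup>2)"
    by (rule Cauchy_Schwarz_ineq_sum)
  have "(real (card Cl))\<^sup>2 \<le> 2 * real k * real (num_edges A)"
  proof -
    have "(real (card Cl))\<^sup>2 = (\<Sum>p<k. real (card (S p)) * 1)\<^sup>2" by (simp add: cardCl)
    also have "\<dots> \<le> (\<Sum>p<k. (real (card (S p)))\<^sup>2) * real k" using cs by simp
    also have "\<dots> \<le> 2 * real (num_edges A) * real k" using sq by (intro mult_right_mono) auto
    finally show ?thesis by (simp add: algebra_simps)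
  qed
  then show ?thesis unfolding card_eq by (rule real_le_rsqrt)
qed

lemma dim_bound:
  fixes A :: "'n::finite \<Rightarrow> 'n \<Rightarrow> real" and g :: "'n \<Rightarrow> nat"
  shows "dim (reduced_space A g) \<le> card (range (\<lambda>a. (g a, deg A a))) + 1"
proof -
  define cls where "cls a = (g a, deg A a)" for a
  define Cls where "Cls = range cls"
  define e where "e c = ((\<chi> a. if cls a = c then 1 else 0)::real^'n, 0::real)" for c
  define B where "B = e ` Cls \<union> {(0, 1)}"
  have finB: "finite B" unfolding B_def Cls_def by simp
  have sub: "reduced_space A g \<subseteq> span B"
  proof
    fix x assume xW: "x \<in> reduced_space A g"
    define v where "v c = fst x $ (SOME a. cls a = c)" for c
    have va: "fst x $ a = v (cls a)" for a
    proof -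
      define s where "s = (SOME b. cls b = cls a)"
      have "\<exists>b. cls b = cls a" by blast
      then have "cls s = cls a" unfolding s_def by (rule someI_ex)
      then have gs: "g a = g s \<and> deg A a = deg A s"
        unfolding cls_def by (metis prod.inject)
      have "\<forall>a b. g a = g b \<and> deg A a = deg A b \<longrightarrow> fst x $ a = fst x $ b"
        using xW unfolding reduced_space_def mem_Collect_eq by blast
      then have "fst x $ a = fst x $ s" using gs by blast
      then show ?thesis unfolding v_def s_def .
    qed
    have comp: "(\<Sum>c\<in>Cls. v c * (if cls a = c then 1 else 0)) = v (cls a)" for a
    proof -
      have "(\<Sum>c\<in>Cls. v c * (if cls a = c then 1 else 0)) = (\<Sum>c\<in>Cls. if cls a = c then v c else 0)"
        by (rule sum.cong) auto
      also have "\<dots> = v (cls a)" using sum.delta[of Cls "cls a" v] by (simp add: Cls_def)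
      finally show ?thesis .
    qed
    have xeq: "x = (\<Sum>c\<in>Cls. v c *\<^sub>R e c) + snd x *\<^sub>R (0, 1)"
    proof (rule prod_eqI)
      show "fst x = fst ((\<Sum>c\<in>Cls. v c *\<^sub>R e c) + snd x *\<^sub>R (0, 1))"
        by (simp add: fst_sum e_def vec_eq_iff comp va)
      show "snd x = snd ((\<Sum>c\<in>Cls. v c *\<^sub>R e c) + snd x *\<^sub>R (0, 1))"
        by (simp add: snd_sum e_def)
    qed
    have "(\<Sum>c\<in>Cls. v c *\<^sub>R e c) + snd x *\<^sub>R (0, 1) \<in> span B"
      by (intro span_add span_sum span_scale span_base) (auto simp: B_def)
    then show "x \<in> span B" using xeq by simp
  qed
  have "dim (reduced_space A g) \<le> card B" by (rule dim_le_card[OF sub finB])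
  also have "card B \<le> card (e ` Cls) + 1" unfolding B_def
    using card_Un_le[of "e ` Cls" "{(0,1)}"] by simp
  also have "card (e ` Cls) \<le> card Cls" by (rule card_image_le) (simp add: Cls_def)
  finally show ?thesis unfolding Cls_def cls_def by simp
qed


lemma aux_ineq: "(P::real) \<le> S \<Longrightarrow> P = D + G \<Longrightarrow> 0 \<le> S - D - G" by simp

lemma L_nonneg:
  fixes A F :: "'n::finite \<Rightarrow> 'n \<Rightarrow> real"
  assumes A01: "\<forall>i j. A i j \<in> {0, 1}"
  shows "maxent_L A F x \<ge> 0"
proof -
  have "(\<Sum>a\<in>UNIV. \<Sum>b\<in>UNIV. (fst x $ a + snd x * F a b) * A a b)
      \<le> (\<Sum>a\<in>UNIV. \<Sum>b\<in>UNIV. sp (fst x $ a + snd x * F a b))"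
  proof (intro sum_mono)
    fix a b
    show "(fst x $ a + snd x * F a b) * A a b \<le> sp (fst x $ a + snd x * F a b)"
      using A01[rule_format, of a b] sp_ge[of "fst x $ a + snd x * F a b"] by auto
  qed
  moreover have "(\<Sum>a\<in>UNIV. \<Sum>b\<in>UNIV. (fst x $ a + snd x * F a b) * A a b)
     = (\<Sum>a\<in>UNIV. deg A a * fst x $ a) + glob_c F A * snd x"
    unfolding deg_def glob_c_def
    by (simp add: algebra_simps sum.distrib sum_distrib_left sum_distrib_right)
  ultimately show ?thesis unfolding L_eq by (rule aux_ineq)
qed

theorem theorem1:
  fixes A :: "'n::finite \<Rightarrow> 'n \<Rightarrow> real"
    and g :: "'n \<Rightarrow> nat" and k :: nat
    and F :: "'n \<Rightarrow> 'n \<Rightarrow> real"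
  assumes A01: "\<forall>i j. A i j \<in> {0, 1}"
    and Asym: "\<forall>i j. A i j = A j i"
    and Arow: "\<forall>i. \<exists>j. A i j \<noteq> 0"
    and g_range: "\<forall>a. g a < k"
    and g_nonempty: "\<forall>p<k. \<exists>a. g a = p"
    and F_block: "\<exists>C :: nat \<Rightarrow> nat \<Rightarrow> real.
                    (\<forall>p<k. \<forall>q<k. C p q = C q p) \<and> (\<forall>a b. F a b = C (g a) (g b))"
  shows "subspace (reduced_space A g)
    \<and> real (dim (reduced_space A g)) \<le> sqrt (2 * real k * real (num_edges A)) + 1
    \<and> convex_on UNIV (maxent_L A F)
    \<and> convex_on (reduced_space A g) (maxent_L A F)
    \<and> (INF x\<in>reduced_space A g. maxent_L A F x) = (INF x. maxent_L A F x)
    \<and> (\<forall>x\<in>reduced_space A g. (\<forall>y\<in>reduced_space A g. maxent_L A F x \<le> maxent_L A F y)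
         \<longrightarrow> (\<forall>y. maxent_L A F x \<le> maxent_L A F y))"
proof -
  obtain C :: "nat \<Rightarrow> nat \<Rightarrow> real" where CC: "(\<forall>p<k. \<forall>q<k. C p q = C q p) \<and> (\<forall>a b. F a b = C (g a) (g b))"
    using F_block by (rule exE)
  then have Fg: "\<forall>a b. F a b = C (g a) (g b)" by (rule conjunct2)
  define W where "W = reduced_space A g"
  define Lf where "Lf = maxent_L A F"
  have sub: "subspace W"
    unfolding subspace_def
  proof (intro conjI ballI allI)
    show "0 \<in> W" unfolding W_def reduced_space_def by simp
  next
    fix x y assume x: "x \<in> W" and y: "y \<in> W"
    show "x + y \<in> W" unfolding W_def reduced_space_def mem_Collect_eq
    proof (intro allI impI)
      fix a b assume h: "g a = g b \<and> deg A a = deg A b"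
      have "fst x $ a = fst x $ b" "fst y $ a = fst y $ b"
        using x y h unfolding W_def reduced_space_def mem_Collect_eq by blast+
      then show "fst (x + y) $ a = fst (x + y) $ b" by simp
    qed
  next
    fix c :: real and x assume x: "x \<in> W"
    show "c *\<^sub>R x \<in> W" unfolding W_def reduced_space_def mem_Collect_eq
    proof (intro allI impI)
      fix a b assume h: "g a = g b \<and> deg A a = deg A b"
      have "fst x $ a = fst x $ b"
        using x h unfolding W_def reduced_space_def mem_Collect_eq by blast
      then show "fst (c *\<^sub>R x) $ a = fst (c *\<^sub>R x) $ b" by simp
    qed
  qed
  have dimb: "real (dim W) \<le> sqrt (2 * real k * real (num_edges A)) + 1"
    using dim_bound[of A g] count_bound[OF A01 Arow g_range] unfolding W_def by linarith
  have cU: "convex_on UNIV Lf" unfolding Lf_def by (rule L_convex)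
  have cW: "convex_on W Lf"
    by (rule convex_on_subset[OF cU]) (auto intro: subspace_imp_convex[OF sub])
  have avg: "\<exists>y'\<in>W. Lf y' \<le> Lf y" for y
    unfolding W_def Lf_def by (rule avg_exists[OF Fg])
  have nn: "Lf x \<ge> 0" for x unfolding Lf_def by (rule L_nonneg[OF A01])
  have bddU: "bdd_below (range Lf)" unfolding bdd_below_def using nn by blast
  have bddW: "bdd_below (Lf ` W)" unfolding bdd_below_def using nn by blast
  have W0: "0 \<in> W" using sub by (rule subspace_0)
  then have Wne: "W \<noteq> {}" by auto
  have i1: "(INF x. Lf x) \<le> (INF x\<in>W. Lf x)"
    by (rule cINF_superset_mono[OF Wne bddU]) auto
  have i2: "(INF x\<in>W. Lf x) \<le> (INF x. Lf x)"
  proof (rule cINF_greatest)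
    show "UNIV \<noteq> {}" by simp
    fix y
    obtain y' where "y' \<in> W" "Lf y' \<le> Lf y" using avg by blast
    then show "(INF x\<in>W. Lf x) \<le> Lf y"
      using cINF_lower[OF bddW, of y'] by linarith
  qed
  have minz: "\<forall>x\<in>W. (\<forall>y\<in>W. Lf x \<le> Lf y) \<longrightarrow> (\<forall>y. Lf x \<le> Lf y)"
  proof (intro ballI impI allI)
    fix x y assume "x \<in> W" "\<forall>y\<in>W. Lf x \<le> Lf y"
    moreover obtain y' where "y' \<in> W" "Lf y' \<le> Lf y" using avg by blast
    ultimately show "Lf x \<le> Lf y" by force
  qed
  show ?thesis
    using sub dimb cU cW i1 i2 minz unfolding W_def Lf_def by (simp add: order_antisym)
qed


end
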